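(* Let $\bm X\in\mathbb{IR}^n$ and let $(f^{\rm u},f^{\rm o})_{\bm X}$ be a superposition relaxation of $f:\bm X\to\mathbb{R}$ with continuous summands, and suppose $\mathcal P^{\rm u}=\{i:\operatorname{wid}(f^{\rm u}_i(X_i))>0\}$ and $\mathcal P^{\rm o}=\{i:\operatorname{wid}(f^{\rm o}_i(X_i))>0\}$ are nonempty. Let $F=[\underline F,\overline F]\in\mathbb{IR}$ satisfy $f(\bm x)\in F$ for all $\bm x\in\bm X$. With $\theta^{\rm u}_i=\operatorname{wid}(f^{\rm u}_i(X_i))/\operatorname{wid}(f^{\rm u}(\bm X))$ and $\theta^{\rm o}_i=\operatorname{wid}(f^{\rm o}_i(X_i))/\operatorname{wid}(f^{\rm o}(\bm X))$, the summands $$f^{\rm u,ref}_i(x_i)=\max\{f^{\rm u}_i(x_i)-\underline f^{\rm u}_i(X_i)+\underline f^{\rm u}(\bm X),\underline F\}-(1-\theta^{\rm u}_i)\max\{\underline f^{\rm u}(\bm X),\underline F\},\quad i\in\mathcal P^{\rm u},$$ $$f^{\rm o,ref}_i(x_i)=\min\{f^{\rm o}_i(x_i)-\overline f^{\rm o}_i(X_i)+\overline f^{\rm o}(\bm X),\overline F\}-(1-\theta^{\rm o}_i)\min\{\overline f^{\rm o}(\bm X),\overline F\},\quad i\in\mathcal P^{\rm o},$$ with all other summands identically zero, define a superposition relaxation $(f^{\rm u,ref},f^{\rm o,ref})_{\bm X}$ of $f$ on $\bm X$.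
   Context: $\mathbb{IR}$ is the set of compact real intervals and $\mathbb{IR}^n$ the set of boxes $\bm X=X_1\times\cdots\times X_n$. A superposition relaxation of $f:\bm X\to\mathbb{R}$ on $\bm X$ is a pair of separable functions $f^{\rm u}(\bm x)=\sum_i f^{\rm u}_i(x_i)$, $f^{\rm o}(\bm x)=\sum_i f^{\rm o}_i(x_i)$ with $f^{\rm u}_i,f^{\rm o}_i:X_i\to\mathbb{R}$ and $f^{\rm u}\le f\le f^{\rm o}$ on $\bm X$. Notation: $\underline f^{\rm u}_i(X_i)=\min_{X_i}f^{\rm u}_i$, $\overline f^{\rm u}_i(X_i)=\max_{X_i}f^{\rm u}_i$, $\operatorname{wid}(f^{\rm u}_i(X_i))=\overline f^{\rm u}_i(X_i)-\underline f^{\rm u}_i(X_i)$, $\underline f^{\rm u}(\bm X)=\sum_i\underline f^{\rm u}_i(X_i)$, $\overline f^{\rm u}(\bm X)=\sum_i\overline f^{\rm u}_i(X_i)$, $\operatorname{wid}(f^{\rm u}(\bm X))=\overline f^{\rm u}(\bm X)-\underline f^{\rm u}(\bm X)$; likewise for $f^{\rm o}$. *)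

theory Defs
  imports "HOL-Analysis.Analysis"
begin

definition box_set :: "real^'n \<Rightarrow> real^'n \<Rightarrow> (real^'n) set" where
  "box_set lo hi = {x. \<forall>i. lo$i \<le> x$i \<and> x$i \<le> hi$i}"

definition comp_iv :: "real^'n \<Rightarrow> real^'n \<Rightarrow> 'n \<Rightarrow> real set" where
  "comp_iv lo hi i = {lo$i..hi$i}"

definition superpos_relax ::
  "real^'n \<Rightarrow> real^'n \<Rightarrow> (real^'n \<Rightarrow> real) \<Rightarrow> ('n \<Rightarrow> real \<Rightarrow> real) \<Rightarrow> ('n \<Rightarrow> real \<Rightarrow> real) \<Rightarrow> bool"
  where
  "superpos_relax lo hi f fu fo \<longleftrightarrow>
     (\<forall>x\<in>box_set lo hi. (\<Sum>i\<in>UNIV. fu i (x$i)) \<le> f x \<and> f x \<le> (\<Sum>i\<in>UNIV. fo i (x$i)))"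

definition smin :: "real^'n \<Rightarrow> real^'n \<Rightarrow> ('n \<Rightarrow> real \<Rightarrow> real) \<Rightarrow> 'n \<Rightarrow> real" where
  "smin lo hi g i = Inf (g i ` comp_iv lo hi i)"

definition smax :: "real^'n \<Rightarrow> real^'n \<Rightarrow> ('n \<Rightarrow> real \<Rightarrow> real) \<Rightarrow> 'n \<Rightarrow> real" where
  "smax lo hi g i = Sup (g i ` comp_iv lo hi i)"

definition swid :: "real^'n \<Rightarrow> real^'n \<Rightarrow> ('n \<Rightarrow> real \<Rightarrow> real) \<Rightarrow> 'n \<Rightarrow> real" where
  "swid lo hi g i = smax lo hi g i - smin lo hi g i"

definition tmin :: "real^'n \<Rightarrow> real^'n \<Rightarrow> ('n \<Rightarrow> real \<Rightarrow> real) \<Rightarrow> real" where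
  "tmin lo hi g = (\<Sum>i\<in>UNIV. smin lo hi g i)"

definition tmax :: "real^'n \<Rightarrow> real^'n \<Rightarrow> ('n \<Rightarrow> real \<Rightarrow> real) \<Rightarrow> real" where
  "tmax lo hi g = (\<Sum>i\<in>UNIV. smax lo hi g i)"

definition twid :: "real^'n \<Rightarrow> real^'n \<Rightarrow> ('n \<Rightarrow> real \<Rightarrow> real) \<Rightarrow> real" where
  "twid lo hi g = tmax lo hi g - tmin lo hi g"

definition posidx :: "real^'n \<Rightarrow> real^'n \<Rightarrow> ('n \<Rightarrow> real \<Rightarrow> real) \<Rightarrow> 'n set" where
  "posidx lo hi g = {i. swid lo hi g i > 0}"

definition theta :: "real^'n \<Rightarrow> real^'n \<Rightarrow> ('n \<Rightarrow> real \<Rightarrow> real) \<Rightarrow> 'n \<Rightarrow> real" where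
  "theta lo hi g i = swid lo hi g i / twid lo hi g"

definition fu_ref :: "real^'n \<Rightarrow> real^'n \<Rightarrow> ('n \<Rightarrow> real \<Rightarrow> real) \<Rightarrow> real \<Rightarrow> 'n \<Rightarrow> real \<Rightarrow> real" where
  "fu_ref lo hi fu Flo i t =
     (if i \<in> posidx lo hi fu then
        max (fu i t - smin lo hi fu i + tmin lo hi fu) Flo
        - (1 - theta lo hi fu i) * max (tmin lo hi fu) Flo
      else 0)"

definition fo_ref :: "real^'n \<Rightarrow> real^'n \<Rightarrow> ('n \<Rightarrow> real \<Rightarrow> real) \<Rightarrow> real \<Rightarrow> 'n \<Rightarrow> real \<Rightarrow> real" where
  "fo_ref lo hi fo Fhi i t =
     (if i \<in> posidx lo hi fo then
        min (fo i t - smax lo hi fo i + tmax lo hi fo) Fhi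
        - (1 - theta lo hi fo i) * min (tmax lo hi fo) Fhi
      else 0)"

end

theory Submission
  imports Defs
begin

lemma maxstep:
  fixes a S d :: real
  assumes "a \<ge> 0" "S \<ge> 0" "d \<ge> 0"
  shows "max (a - d) 0 + max (S - d) 0 \<le> max (a + S - d) 0"
  using assms by (simp add: max_def)

lemma sum_max_le:
  fixes a :: "'i \<Rightarrow> real" and d :: real
  assumes "finite P" "\<forall>i\<in>P. a i \<ge> 0" "d \<ge> 0"
  shows "(\<Sum>i\<in>P. max (a i - d) 0) \<le> max ((\<Sum>i\<in>P. a i) - d) 0"
  using assms
proof (induction P rule: finite_induct)
  case empty then show ?case by simp
next
  case (insert j P)
  have S: "(\<Sum>i\<in>P. a i) \<ge> 0" using insert by (simp add: sum_nonneg)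
  have "(\<Sum>i\<in>insert j P. max (a i - d) 0) = max (a j - d) 0 + (\<Sum>i\<in>P. max (a i - d) 0)"
    using insert by simp
  also have "\<dots> \<le> max (a j - d) 0 + max ((\<Sum>i\<in>P. a i) - d) 0" using insert by simp
  also have "\<dots> \<le> max (a j + (\<Sum>i\<in>P. a i) - d) 0"
    using maxstep[of "a j" "\<Sum>i\<in>P. a i" d] insert S by simp
  finally show ?case using insert by simp
qed

lemma key:
  fixes a th :: "'i \<Rightarrow> real" and M F f0 :: real
  assumes fin: "finite P" and ne: "P \<noteq> {}" and a: "\<forall>i\<in>P. a i \<ge> 0"
    and f1: "M + (\<Sum>i\<in>P. a i) \<le> f0" and f2: "F \<le> f0" and th: "(\<Sum>i\<in>P. th i) = 1"
  shows "(\<Sum>i\<in>P. max (a i + M) F - (1 - th i) * max M F) \<le> f0"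
proof -
  define c where "c = max M F"
  define d where "d = c - M"
  have d0: "d \<ge> 0" unfolding d_def c_def by simp
  have eq: "max (a i + M) F = c + max (a i - d) 0" if "i \<in> P" for i
    using a that unfolding d_def c_def by (auto simp: max_def)
  have "(\<Sum>i\<in>P. max (a i + M) F - (1 - th i) * max M F)
      = (\<Sum>i\<in>P. c + max (a i - d) 0) - (\<Sum>i\<in>P. (1 - th i) * c)"
    by (simp add: sum_subtractf eq c_def)
  also have "\<dots> = real (card P) * c + (\<Sum>i\<in>P. max (a i - d) 0) - (real (card P) - 1) * c"
    by (simp add: sum.distrib sum_subtractf th sum_distrib_right[symmetric] left_diff_distrib)
  also have "\<dots> = c + (\<Sum>i\<in>P. max (a i - d) 0)" by (simp add: algebra_simps)
  also have "\<dots> \<le> c + max ((\<Sum>i\<in>P. a i) - d) 0"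
    using sum_max_le[OF fin a d0] by simp
  also have "\<dots> \<le> f0" using f1 f2 sum_nonneg[of P a] a unfolding d_def c_def by (auto simp: max_def)
  finally show ?thesis .
qed

lemma comp_bounds:
  fixes g :: "real \<Rightarrow> real"
  assumes "continuous_on {l..h} g" "t \<in> {l..h}"
  shows "Inf (g ` {l..h}) \<le> g t" "g t \<le> Sup (g ` {l..h})"
proof -
  have "compact (g ` {l..h})" using assms(1) compact_continuous_image by blast
  then have b: "bounded (g ` {l..h})" by (rule compact_imp_bounded)
  show "Inf (g ` {l..h}) \<le> g t"
    using b assms(2) by (intro cInf_lower) (auto intro: bounded_imp_bdd_below)
  show "g t \<le> Sup (g ` {l..h})"
    using b assms(2) by (intro cSup_upper) (auto intro: bounded_imp_bdd_above)
qed


lemma neg_term: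
  fixes a T F th :: real
  shows "max (a + - T) (- F) - (1 - th) * max (- T) (- F) = - (min (T - a) F - (1 - th) * min T F)"
  by (simp add: max_def min_def algebra_simps)

lemma comp_facts:
  assumes box: "\<forall>i. lo$i \<le> hi$i"
    and cont: "\<forall>i. continuous_on (comp_iv lo hi i) (g i)"
    and x: "x \<in> box_set lo hi"
  shows "smin lo hi g i \<le> g i (x$i)" "g i (x$i) \<le> smax lo hi g i"
    "swid lo hi g i \<ge> 0"
    "i \<notin> posidx lo hi g \<Longrightarrow> g i (x$i) = smin lo hi g i"
    "i \<notin> posidx lo hi g \<Longrightarrow> g i (x$i) = smax lo hi g i"
proof -
  have t: "x$i \<in> {lo$i..hi$i}" using x by (simp add: box_set_def)
  have c: "continuous_on {lo$i..hi$i} (g i)" using cont by (simp add: comp_iv_def)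
  show 1: "smin lo hi g i \<le> g i (x$i)" using comp_bounds[OF c t]
    by (simp add: smin_def comp_iv_def)
  show 2: "g i (x$i) \<le> smax lo hi g i" using comp_bounds[OF c t]
    by (simp add: smax_def comp_iv_def)
  show 3: "swid lo hi g i \<ge> 0" using 1 2 by (simp add: swid_def)
  show "i \<notin> posidx lo hi g \<Longrightarrow> g i (x$i) = smin lo hi g i"
    using 1 2 by (simp add: posidx_def swid_def)
  show "i \<notin> posidx lo hi g \<Longrightarrow> g i (x$i) = smax lo hi g i"
    using 1 2 by (simp add: posidx_def swid_def)
qed

lemma theta_sum:
  fixes lo hi :: "real^'n"
  assumes box: "\<forall>i. lo$i \<le> hi$i"
    and cont: "\<forall>i. continuous_on (comp_iv lo hi i) (g i)"
    and P: "posidx lo hi g \<noteq> {}"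
  shows "(\<Sum>i\<in>posidx lo hi g. theta lo hi g i) = 1"
proof -
  have ne: "box_set lo hi \<noteq> {}" using box by (auto simp: box_set_def intro!: exI[of _ lo])
  then obtain x where x: "x \<in> box_set lo hi" by blast
  have sw: "\<And>i. swid lo hi g i \<ge> 0" using comp_facts[OF box cont x] by blast
  have tw: "twid lo hi g = (\<Sum>i\<in>UNIV. swid lo hi g i)"
    by (simp add: twid_def tmax_def tmin_def swid_def sum_subtractf)
  also have "\<dots> = (\<Sum>i\<in>posidx lo hi g. swid lo hi g i)"
    using sw by (intro sum.mono_neutral_right) (auto simp: posidx_def less_le)
  finally have tw: "twid lo hi g = (\<Sum>i\<in>posidx lo hi g. swid lo hi g i)" .
  have pos: "twid lo hi g > 0" unfolding tw
    using P by (intro sum_pos) (auto simp: posidx_def)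
  show ?thesis unfolding theta_def sum_divide_distrib[symmetric] using pos tw by simp
qed

lemma under:
  fixes lo hi :: "real^'n" and f :: "real^'n \<Rightarrow> real"
  assumes box: "\<forall>i. lo$i \<le> hi$i"
    and cont: "\<forall>i. continuous_on (comp_iv lo hi i) (fu i)"
    and P: "posidx lo hi fu \<noteq> {}"
    and x: "x \<in> box_set lo hi"
    and r: "(\<Sum>i\<in>UNIV. fu i (x$i)) \<le> f x" and e: "Flo \<le> f x"
  shows "(\<Sum>i\<in>UNIV. fu_ref lo hi fu Flo i (x$i)) \<le> f x"
proof -
  define Q where "Q = posidx lo hi fu"
  define a where "a i = fu i (x$i) - smin lo hi fu i" for i
  note cf = comp_facts[OF box cont x]
  have a0: "\<forall>i\<in>Q. a i \<ge> 0" using cf by (simp add: a_def)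
  have "(\<Sum>i\<in>UNIV. fu i (x$i)) = (\<Sum>i\<in>UNIV. smin lo hi fu i + a i)"
    by (simp add: a_def)
  also have "\<dots> = tmin lo hi fu + (\<Sum>i\<in>UNIV. a i)" by (simp add: sum.distrib tmin_def)
  also have "(\<Sum>i\<in>UNIV. a i) = (\<Sum>i\<in>Q. a i)"
    using cf(4) by (intro sum.mono_neutral_right) (auto simp: a_def Q_def)
  finally have f1: "tmin lo hi fu + (\<Sum>i\<in>Q. a i) \<le> f x" using r by simp
  have "(\<Sum>i\<in>UNIV. fu_ref lo hi fu Flo i (x$i))
     = (\<Sum>i\<in>Q. max (a i + tmin lo hi fu) Flo - (1 - theta lo hi fu i) * max (tmin lo hi fu) Flo)"
    by (intro sum.mono_neutral_cong_right) (auto simp: fu_ref_def Q_def a_def)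
  also have "\<dots> \<le> f x"
    by (rule key[OF _ _ a0 f1 e]) (use P theta_sum[OF box cont P] in \<open>auto simp: Q_def\<close>)
  finally show ?thesis .
qed

lemma over:
  fixes lo hi :: "real^'n" and f :: "real^'n \<Rightarrow> real"
  assumes box: "\<forall>i. lo$i \<le> hi$i"
    and cont: "\<forall>i. continuous_on (comp_iv lo hi i) (fo i)"
    and P: "posidx lo hi fo \<noteq> {}"
    and x: "x \<in> box_set lo hi"
    and r: "f x \<le> (\<Sum>i\<in>UNIV. fo i (x$i))" and e: "f x \<le> Fhi"
  shows "f x \<le> (\<Sum>i\<in>UNIV. fo_ref lo hi fo Fhi i (x$i))"
proof -
  define Q where "Q = posidx lo hi fo"
  define a where "a i = smax lo hi fo i - fo i (x$i)" for i
  note cf = comp_facts[OF box cont x]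
  have a0: "\<forall>i\<in>Q. a i \<ge> 0" using cf by (simp add: a_def)
  have "(\<Sum>i\<in>UNIV. fo i (x$i)) = (\<Sum>i\<in>UNIV. smax lo hi fo i - a i)"
    by (simp add: a_def)
  also have "\<dots> = tmax lo hi fo - (\<Sum>i\<in>UNIV. a i)" by (simp add: sum_subtractf tmax_def)
  also have "(\<Sum>i\<in>UNIV. a i) = (\<Sum>i\<in>Q. a i)"
    using cf(5) by (intro sum.mono_neutral_right) (auto simp: a_def Q_def)
  finally have f1: "- tmax lo hi fo + (\<Sum>i\<in>Q. a i) \<le> - f x" using r by simp
  have e': "- Fhi \<le> - f x" using e by simp
  have "(\<Sum>i\<in>Q. max (a i + - tmax lo hi fo) (- Fhi) - (1 - theta lo hi fo i) * max (- tmax lo hi fo) (- Fhi)) \<le> - f x"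
    by (rule key[OF _ _ a0 f1 e']) (use P theta_sum[OF box cont P] in \<open>auto simp: Q_def\<close>)
  also have "(\<Sum>i\<in>Q. max (a i + - tmax lo hi fo) (- Fhi) - (1 - theta lo hi fo i) * max (- tmax lo hi fo) (- Fhi))
     = - (\<Sum>i\<in>Q. min (fo i (x$i) - smax lo hi fo i + tmax lo hi fo) Fhi - (1 - theta lo hi fo i) * min (tmax lo hi fo) Fhi)"
    unfolding sum_negf[symmetric] neg_term by (simp add: a_def algebra_simps)
  also have "(\<Sum>i\<in>Q. min (fo i (x$i) - smax lo hi fo i + tmax lo hi fo) Fhi - (1 - theta lo hi fo i) * min (tmax lo hi fo) Fhi)
     = (\<Sum>i\<in>UNIV. fo_ref lo hi fo Fhi i (x$i))"
    by (intro sum.mono_neutral_cong_right[symmetric]) (auto simp: fo_ref_def Q_def)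
  finally show ?thesis by simp
qed

theorem corollary1:
  fixes lo hi :: "real^'n" and f :: "real^'n \<Rightarrow> real"
    and fu fo :: "'n \<Rightarrow> real \<Rightarrow> real" and Flo Fhi :: real
  assumes box: "\<forall>i. lo$i \<le> hi$i"
    and relax: "superpos_relax lo hi f fu fo"
    and cont_u: "\<forall>i. continuous_on (comp_iv lo hi i) (fu i)"
    and cont_o: "\<forall>i. continuous_on (comp_iv lo hi i) (fo i)"
    and Pu: "posidx lo hi fu \<noteq> {}"
    and Po: "posidx lo hi fo \<noteq> {}"
    and F: "Flo \<le> Fhi"
    and encl: "\<forall>x\<in>box_set lo hi. f x \<in> {Flo..Fhi}"
  shows "superpos_relax lo hi f (fu_ref lo hi fu Flo) (fo_ref lo hi fo Fhi)"
  unfolding superpos_relax_def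
proof
  fix x assume x: "x \<in> box_set lo hi"
  have r: "(\<Sum>i\<in>UNIV. fu i (x$i)) \<le> f x" "f x \<le> (\<Sum>i\<in>UNIV. fo i (x$i))"
    using relax x by (auto simp: superpos_relax_def)
  have e: "Flo \<le> f x" "f x \<le> Fhi" using encl x by auto
  show "(\<Sum>i\<in>UNIV. fu_ref lo hi fu Flo i (x$i)) \<le> f x \<and> f x \<le> (\<Sum>i\<in>UNIV. fo_ref lo hi fo Fhi i (x$i))"
    using under[where f=f and fu=fu and Flo=Flo, OF box cont_u Pu x r(1) e(1)] over[where f=f and fo=fo and Fhi=Fhi, OF box cont_o Po x r(2) e(2)] by simp
qed

end
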